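(* Let $k\ge 3$ be odd and $i\in\{1,\ldots,k-1\}$ such that $\binom{k}{i}$ and $\binom{k-1}{i}$ are both odd. Then $\lambda_{k-i+1}-\lambda_{k-i-1}\equiv 2\pmod 4$.
   Context: For $0\le i\le k$ and $j=0,\ldots,k$ define $\lambda_j=\sum_{\ell=0}^{k-i}(-1)^\ell\binom{j}{\ell}\binom{k-j}{i-j+\ell}^2$, with the convention $\binom{a}{b}=0$ unless $0\le b\le a$; these are the eigenvalues of the graph $J(2k,k,i)$ on $k$-subsets of $\{1,\ldots,2k\}$ (adjacent iff intersection has size $i$). *)

theory Defs
  imports Main
begin

definition binomz :: "int \<Rightarrow> int \<Rightarrow> int" where
  "binomz a b = (if 0 \<le> b \<and> b \<le> a then int (nat a choose nat b) else 0)"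

text \<open>Eigenvalue lambda_j of J(2k,k,i).\<close>
definition jlambda :: "nat \<Rightarrow> nat \<Rightarrow> nat \<Rightarrow> int" where
  "jlambda k i j = (\<Sum>l = 0..k - i. (-1) ^ l * binomz (int j) (int l)
       * (binomz (int k - int j) (int i - int j + int l))^2)"

end

theory Submission imports Defs begin


lemma alt_step:
  fixes f :: "nat \<Rightarrow> int"
  shows "(\<Sum>j\<le>Suc p. (-1)^j * int (Suc p choose j) * f j)
       = (\<Sum>j\<le>p. (-1)^j * int (p choose j) * f j) - (\<Sum>j\<le>p. (-1)^j * int (p choose j) * f (Suc j))"
proof -
  have "(\<Sum>j\<le>Suc p. (-1)^j * int (Suc p choose j) * f j)
     = (\<Sum>j\<le>Suc p. (-1)^j * int (p choose j) * f j + (if j = 0 then 0 else (-1)^j * int (p choose (j - 1)) * f j))"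
    by (rule sum.cong) (auto simp: choose_reduce_nat algebra_simps)
  also have "\<dots> = (\<Sum>j\<le>Suc p. (-1)^j * int (p choose j) * f j) + (\<Sum>j\<le>Suc p. (if j = 0 then 0 else (-1)^j * int (p choose (j - 1)) * f j))"
    by (rule sum.distrib)
  also have "(\<Sum>j\<le>Suc p. (-1)^j * int (p choose j) * f j) = (\<Sum>j\<le>p. (-1)^j * int (p choose j) * f j)"
    by (simp add: sum.atMost_Suc)
  also have "(\<Sum>j\<le>Suc p. (if j = 0 then 0 else (-1)^j * int (p choose (j - 1)) * f j)) = - (\<Sum>j\<le>p. (-1)^j * int (p choose j) * f (Suc j))"
    by (subst sum.atMost_Suc_shift) (simp add: sum_negf)
  finally show ?thesis by simp
qed

lemma alt_choose:
  "(\<Sum>j\<le>p. (-1)^j * int (p choose j) * int ((b + j) choose c)) = (-1)^p * (if p \<le> c then int (b choose (c - p)) else 0)"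
proof (induction p arbitrary: b c)
  case 0
  then show ?case by simp
next
  case (Suc p)
  have "(\<Sum>j\<le>Suc p. (-1)^j * int (Suc p choose j) * int ((b + j) choose c))
       = (\<Sum>j\<le>p. (-1)^j * int (p choose j) * int ((b + j) choose c)) - (\<Sum>j\<le>p. (-1)^j * int (p choose j) * int ((Suc b + j) choose c))"
    using alt_step[of p "\<lambda>j. int ((b + j) choose c)"] by simp
  also have "\<dots> = (-1)^p * (if p \<le> c then int (b choose (c - p)) else 0) - (-1)^p * (if p \<le> c then int (Suc b choose (c - p)) else 0)"
    using Suc.IH[of b c] Suc.IH[of "Suc b" c] by simp
  also have "\<dots> = (-1)^Suc p * (if Suc p \<le> c then int (b choose (c - Suc p)) else 0)"
  proof (cases "Suc p \<le> c")
    case True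
    then obtain e where e: "c - p = Suc e" "c - Suc p = e" by (metis Suc_diff_le diff_Suc_Suc le_SucE le_refl not_less_eq_eq)
    show ?thesis using True e by (simp add: algebra_simps)
  next
    case False
    then show ?thesis by (cases "p = c") auto
  qed
  finally show ?case .
qed

lemma alt_choose2:
  "(\<Sum>j\<le>p. (-1)^j * int (p choose j) * int ((a + j) choose j)) = (-1)^p * int (a choose p)"
proof -
  have "(\<Sum>j\<le>p. (-1)^j * int (p choose j) * int ((a + j) choose j)) = (\<Sum>j\<le>p. (-1)^j * int (p choose j) * int ((a + j) choose a))"
  proof (rule sum.cong)
    fix j assume "j \<in> {..p}"
    have "(a + j) choose j = (a + j) choose a" using binomial_symmetric[of a "a+j"] by simp
    then show "(-1)^j * int (p choose j) * int ((a + j) choose j) = (-1)^j * int (p choose j) * int ((a + j) choose a)" by simp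
  qed simp
  also have "\<dots> = (-1)^p * (if p \<le> a then int (a choose (a - p)) else 0)" by (rule alt_choose)
  also have "\<dots> = (-1)^p * int (a choose p)"
    by (auto simp: binomial_symmetric[symmetric])
  finally show ?thesis .
qed

lemma subset_choose: "j \<le> p \<Longrightarrow> ((a - j) choose (p - j)) * (a choose j) = (a choose p) * (p choose j)"
proof (cases "p \<le> a")
  case True
  assume "j \<le> p"
  then show ?thesis using choose_mult[of j p a] True by (simp add: mult.commute)
next
  case False
  assume "j \<le> p"
  then show ?thesis using False by (cases "j \<le> a") (auto simp: binomial_eq_0)
qed

lemma vand: "(a choose j) * ((a + x - j) choose (d - j)) = (a choose j) * (\<Sum>l\<le>d - j. (x choose l) * ((a - j) choose (d - j - l)))"
proof (cases "j \<le> a")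
  case True
  have "(\<Sum>l\<le>d - j. (x choose l) * ((a - j) choose (d - j - l))) = (x + (a - j)) choose (d - j)"
    by (rule vandermonde)
  with True show ?thesis by (simp add: add.commute)
qed simp

lemma tri_swap:
  fixes g :: "nat \<Rightarrow> nat \<Rightarrow> int"
  shows "(\<Sum>j\<le>d. \<Sum>l\<le>d - j. g j l) = (\<Sum>l\<le>d. \<Sum>j\<le>d - l. g j l)"
proof -
  have A: "\<And>j. j \<le> d \<Longrightarrow> (\<Sum>l\<le>d - j. g j l) = (\<Sum>l\<le>d. if j + l \<le> d then g j l else 0)"
  proof -
    fix j assume "j \<le> d"
    have "{..d} \<inter> {l. j + l \<le> d} = {..d - j}" using \<open>j \<le> d\<close> by auto
    then show "(\<Sum>l\<le>d - j. g j l) = (\<Sum>l\<le>d. if j + l \<le> d then g j l else 0)"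
      using sum.inter_restrict[of "{..d}" "g j" "{l. j + l \<le> d}"] by simp
  qed
  have B: "\<And>l. l \<le> d \<Longrightarrow> (\<Sum>j\<le>d - l. g j l) = (\<Sum>j\<le>d. if j + l \<le> d then g j l else 0)"
  proof -
    fix l assume "l \<le> d"
    have "{..d} \<inter> {j. j + l \<le> d} = {..d - l}" using \<open>l \<le> d\<close> by auto
    then show "(\<Sum>j\<le>d - l. g j l) = (\<Sum>j\<le>d. if j + l \<le> d then g j l else 0)"
      using sum.inter_restrict[of "{..d}" "\<lambda>j. g j l" "{j. j + l \<le> d}"] by simp
  qed
  have "(\<Sum>j\<le>d. \<Sum>l\<le>d - j. g j l) = (\<Sum>j\<le>d. \<Sum>l\<le>d. if j + l \<le> d then g j l else 0)"
    by (rule sum.cong[OF refl]) (simp add: A)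
  also have "\<dots> = (\<Sum>l\<le>d. \<Sum>j\<le>d. if j + l \<le> d then g j l else 0)" by (rule sum.swap)
  also have "\<dots> = (\<Sum>l\<le>d. \<Sum>j\<le>d - l. g j l)"
    by (rule sum.cong[OF refl]) (simp add: B)
  finally show ?thesis .
qed

lemma key:
  "(\<Sum>l\<le>d. (-1)^l * int (x choose l) * int (a choose (d - l))^2)
   = (-1)^d * (\<Sum>j\<le>d. (-1)^j * int ((a + x - j) choose (d - j)) * int (a choose j) * int ((a + j) choose j))"
proof -
  have "(\<Sum>j\<le>d. (-1)^j * int ((a + x - j) choose (d - j)) * int (a choose j) * int ((a + j) choose j))
      = (\<Sum>j\<le>d. \<Sum>l\<le>d - j. (-1)^j * int (x choose l) * int ((a - j) choose (d - j - l)) * int (a choose j) * int ((a + j) choose j))"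
  proof (rule sum.cong[OF refl])
    fix j
    have "int (a choose j) * int ((a + x - j) choose (d - j)) = int ((a choose j) * (\<Sum>l\<le>d - j. (x choose l) * ((a - j) choose (d - j - l))))"
      using vand[of a j x d] by (simp only: of_nat_mult[symmetric])
    also have "\<dots> = (\<Sum>l\<le>d - j. int (x choose l) * int ((a - j) choose (d - j - l)) * int (a choose j))"
      by (simp add: sum_distrib_left algebra_simps)
    finally have E: "int (a choose j) * int ((a + x - j) choose (d - j)) = (\<Sum>l\<le>d - j. int (x choose l) * int ((a - j) choose (d - j - l)) * int (a choose j))" .
    have "(-1)^j * int ((a + x - j) choose (d - j)) * int (a choose j) * int ((a + j) choose j)
        = ((-1)^j * int ((a + j) choose j)) * (int (a choose j) * int ((a + x - j) choose (d - j)))" by (simp add: algebra_simps)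
    also have "\<dots> = (\<Sum>l\<le>d - j. (-1)^j * int (x choose l) * int ((a - j) choose (d - j - l)) * int (a choose j) * int ((a + j) choose j))"
      unfolding E by (simp add: sum_distrib_left algebra_simps)
    finally show "(-1)^j * int ((a + x - j) choose (d - j)) * int (a choose j) * int ((a + j) choose j)
        = (\<Sum>l\<le>d - j. (-1)^j * int (x choose l) * int ((a - j) choose (d - j - l)) * int (a choose j) * int ((a + j) choose j))" .
  qed
  also have "\<dots> = (\<Sum>l\<le>d. \<Sum>j\<le>d - l. (-1)^j * int (x choose l) * int ((a - j) choose (d - j - l)) * int (a choose j) * int ((a + j) choose j))"
    by (rule tri_swap)
  also have "\<dots> = (\<Sum>l\<le>d. (-1)^(d - l) * int (x choose l) * int (a choose (d - l))^2)"
  proof (rule sum.cong[OF refl])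
    fix l
    define p where "p = d - l"
    have "(\<Sum>j\<le>d - l. (-1)^j * int (x choose l) * int ((a - j) choose (d - j - l)) * int (a choose j) * int ((a + j) choose j))
        = (\<Sum>j\<le>p. (int (x choose l) * int (a choose p)) * ((-1)^j * int (p choose j) * int ((a + j) choose j)))"
    proof (rule sum.cong)
      fix j assume "j \<in> {..p}"
      then have jp: "j \<le> p" by simp
      have "d - j - l = p - j" unfolding p_def by simp
      moreover have "int ((a - j) choose (p - j)) * int (a choose j) = int (a choose p) * int (p choose j)"
        using subset_choose[OF jp, of a] by (simp only: of_nat_mult[symmetric])
      ultimately show "(-1)^j * int (x choose l) * int ((a - j) choose (d - j - l)) * int (a choose j) * int ((a + j) choose j)
          = (int (x choose l) * int (a choose p)) * ((-1)^j * int (p choose j) * int ((a + j) choose j))"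
        by (metis (no_types, lifting) mult.assoc mult.left_commute)
    qed (simp add: p_def)
    also have "\<dots> = (int (x choose l) * int (a choose p)) * ((-1)^p * int (a choose p))"
      by (simp add: sum_distrib_left[symmetric] alt_choose2)
    finally show "(\<Sum>j\<le>d - l. (-1)^j * int (x choose l) * int ((a - j) choose (d - j - l)) * int (a choose j) * int ((a + j) choose j))
        = (-1)^(d - l) * int (x choose l) * int (a choose (d - l))^2"
      by (simp add: p_def power2_eq_square algebra_simps)
  qed
  finally have R: "(\<Sum>j\<le>d. (-1)^j * int ((a + x - j) choose (d - j)) * int (a choose j) * int ((a + j) choose j))
     = (\<Sum>l\<le>d. (-1)^(d - l) * int (x choose l) * int (a choose (d - l))^2)" .
  have "(-1)^d * (\<Sum>l\<le>d. (-1)^(d - l) * int (x choose l) * int (a choose (d - l))^2)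
      = (\<Sum>l\<le>d. (-1)^l * int (x choose l) * int (a choose (d - l))^2)"
    unfolding sum_distrib_left
  proof (rule sum.cong[OF refl])
    fix l assume "l \<in> {..d}"
    then have "d = l + (d - l)" by simp
    then have "(-1::int)^d * (-1)^(d - l) = (-1)^l * ((-1)^(d-l) * (-1)^(d-l))"
      by (metis power_add mult.assoc)
    also have "\<dots> = (-1)^l" by (simp add: power_add[symmetric])
    finally have "(-1::int)^d * (-1)^(d - l) = (-1)^l" .
    then show "(-1)^d * ((-1)^(d - l) * int (x choose l) * int (a choose (d - l))^2) = (-1)^l * int (x choose l) * int (a choose (d - l))^2"
      by (metis mult.assoc)
  qed
  then show ?thesis using R by simp
qed




lemma even2: "odd ((2*a) choose r) \<longleftrightarrow> even r \<and> odd (a choose (r div 2))"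
proof (induction a arbitrary: r)
  case 0
  have z: "\<And>k. (0::nat) choose k = (if k = 0 then 1 else 0)" by (case_tac k) auto
  show ?case by (simp add: z) presburger
next
  case (Suc a)
  show ?case
  proof (cases r)
    case 0 then show ?thesis by simp
  next
    case (Suc r1)
    show ?thesis
    proof (cases r1)
      case 0
      have "2 * Suc a choose 1 = 2 * Suc a" by simp
      then show ?thesis using Suc 0 by simp
    next
      case (Suc r2)
      have eq: "2 * Suc a = Suc (Suc (2*a))" by simp
      have "(2 * Suc a) choose r = ((2*a) choose (Suc (Suc r2))) + 2 * ((2*a) choose (Suc r2)) + ((2*a) choose r2)"
        unfolding eq using \<open>r = Suc r1\<close> Suc by simp
      moreover have "Suc a choose (r div 2) = (a choose (r div 2)) + (a choose (r2 div 2))"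
        using \<open>r = Suc r1\<close> Suc by simp
      moreover have "r div 2 = Suc (r2 div 2)" using \<open>r = Suc r1\<close> Suc by simp
      ultimately show ?thesis using Suc.IH[of "Suc (Suc r2)"] Suc.IH[of r2] \<open>r = Suc r1\<close> Suc by auto
    qed
  qed
qed

lemma lucas2: "odd (n choose r) \<longleftrightarrow> odd ((n div 2) choose (r div 2)) \<and> (odd r \<longrightarrow> odd n)"
proof (cases "even n")
  case True
  then obtain a where "n = 2*a" by blast
  then show ?thesis using even2[of a r] by auto
next
  case False
  then obtain a where n: "n = Suc (2*a)" by (metis oddE Suc_eq_plus1)
  show ?thesis
  proof (cases r)
    case 0 then show ?thesis using n by simp
  next
    case (Suc r0)
    have "n choose r = ((2*a) choose r) + ((2*a) choose r0)" using n Suc by simp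
    then show ?thesis using even2[of a r] even2[of a r0] n Suc by auto
  qed
qed

lemma G1: "odd (n choose 2^s) \<longleftrightarrow> odd (n div 2^s)"
proof (induction s arbitrary: n)
  case 0 then show ?case by simp
next
  case (Suc s)
  have "odd (n choose 2^Suc s) \<longleftrightarrow> odd ((n div 2) choose 2^s)"
    using lucas2[of n "2^Suc s"] by simp
  also have "\<dots> \<longleftrightarrow> odd (n div 2 div 2^s)" by (rule Suc.IH)
  also have "n div 2 div 2^s = n div 2^Suc s" by (simp add: div_mult2_eq)
  finally show ?case .
qed

lemma G3: "odd (n choose r) \<Longrightarrow> odd ((n div 2^s) choose (r div 2^s))"
proof (induction s)
  case 0 then show ?case by simp
next
  case (Suc s)
  then have "odd ((n div 2^s) choose (r div 2^s))" by simp
  then have "odd ((n div 2^s div 2) choose (r div 2^s div 2))" using lucas2 by blast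
  moreover have "\<And>m::nat. m div 2^Suc s = m div 2^s div 2" by (metis div_mult2_eq power_Suc2)
  ultimately show ?case by simp
qed

lemma central: "j \<ge> 1 \<Longrightarrow> (2*j) choose j = 2 * ((2*j-1) choose (j-1))"
proof -
  assume "j \<ge> 1"
  then obtain t where t: "j = Suc t" by (cases j) auto
  have "(2*j) choose j = ((2*t+1) choose (t+1)) + ((2*t+1) choose t)" using t by simp
  also have "(2*t+1) choose (t+1) = (2*t+1) choose t"
    using binomial_symmetric[of t "2*t+1"] by (simp add: Suc_diff_le)
  finally show ?thesis using t by simp
qed

lemma pow2: "j \<ge> 1 \<Longrightarrow> odd ((2*j-1) choose (j-1)) \<Longrightarrow> \<exists>r. j = 2^r"
proof (induction j rule: less_induct)
  case (less j)
  show ?case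
  proof (cases "j = 1")
    case True then show ?thesis by (metis power_0)
  next
    case False
    with less.prems have j2: "j \<ge> 2" by simp
    show ?thesis
    proof (cases "even j")
      case True
      then obtain j' where j': "j = 2*j'" by blast
      with j2 have "j' \<ge> 1" by simp
      have "2*j - 1 = Suc (2*(2*j'-1))" "j - 1 = Suc (2*(j'-1))" using j' \<open>j' \<ge> 1\<close> by auto
      then have "odd ((2*j'-1) choose (j'-1))"
        using lucas2[of "2*j-1" "j-1"] less.prems(2) by simp
      then obtain r where "j' = 2^r" using less.IH[of j'] j' \<open>j' \<ge> 1\<close> by auto
      then show ?thesis using j' by (metis power_Suc)
    next
      case False
      then obtain s where s: "j = Suc (2*s)" by (metis oddE Suc_eq_plus1)
      with j2 have "s \<ge> 1" by simp
      have "2*j - 1 = Suc (2*(2*s))" "j - 1 = 2*s" using s by auto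
      then have "odd ((2*s) choose s)"
        using lucas2[of "2*j-1" "j-1"] less.prems(2) by simp
      moreover have "even ((2*s) choose s)" using central[OF \<open>s \<ge> 1\<close>] by simp
      ultimately show ?thesis by simp
    qed
  qed
qed



lemma divq: "v < 2*j \<Longrightarrow> (2*j*q + v) div (2*j) = (q::nat)"
  by simp

lemma term4:
  fixes i j k :: nat
  assumes j2: "2 \<le> j" and ie: "even i" and ko: "odd (k choose i)"
  shows "(4::int) dvd int ((2*j) choose j) * int ((k - j) choose i) * (int ((i+1+j) choose (2*j)) - int ((i+j-1) choose (2*j)))"
proof -
  define c where "c = (2*j-1) choose (j-1)"
  have C: "(2*j) choose j = 2 * c" unfolding c_def using central[of j] j2 by simp
  show ?thesis
  proof (cases "even c")
    case True
    then obtain c' where "c = 2*c'" by blast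
    then have "(2*j) choose j = 4 * c'" using C by simp
    then show ?thesis by simp
  next
    case False
    then obtain r where r: "j = 2^r" using pow2[of j] j2 c_def by auto
    with j2 have "r \<ge> 1" by (cases r) auto
    then have je: "even j" using r by (cases r) auto
    show ?thesis
    proof (cases "even ((k - j) choose i)")
      case True
      then obtain e where "(k - j) choose i = 2*e" by blast
      then show ?thesis using C by simp
    next
      case False
      have idj: "even (i div j)"
      proof (rule ccontr)
        assume A: "\<not> even (i div j)"
        have "odd ((k div j) choose (i div j))" using G3[OF ko, of r] r by simp
        then have kj: "odd (k div j)" using lucas2[of "k div j" "i div j"] A by auto
        then have "k div j \<ge> 1" by (cases "k div j") auto
        then have kge: "k \<ge> j" using j2 by (metis div_less le_less_linear not_one_le_zero)
        have "k div j = Suc ((k - j) div j)" using kge j2 by (simp add: le_div_geq)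
        with kj have e1: "even ((k - j) div j)" by simp
        have "odd (((k - j) div j) choose (i div j))" using G3[OF False, of r] r by simp
        then have "odd ((k - j) div j)" using lucas2[of "(k - j) div j" "i div j"] A by auto
        with e1 show False by simp
      qed
      define t where "t = i div j"
      define u where "u = i mod j"
      obtain q where q: "t = 2*q" using idj t_def by blast
      have iu: "i = 2*j*q + u" using q t_def u_def by (metis div_mult_mod_eq mult.commute mult.left_commute)
      have ul: "u < j" using j2 u_def by simp
      have ue: "even u" using iu ie je by simp
      have "u + 2 \<le> j" using ul ue je by (metis add_2_eq_Suc' dvd_triv_left even_Suc le_eq_less_or_eq not_less_eq_eq Suc_leI)
      then have l1: "u + j + 1 < 2*j" and l2: "u + j - 1 < 2*j" by auto
      have "i+1+j = 2*j*q + (u+j+1)" using iu by simp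
      then have "(i+1+j) div (2*j) = q" using divq[OF l1, of q] by (simp add: add.assoc)
      then have d1: "(i+1+j) div 2^Suc r = q" using r by simp
      have "i+j-1 = 2*j*q + (u+j-1)" using iu j2 by simp
      then have "(i+j-1) div (2*j) = q" using divq[OF l2, of q] by simp
      then have d2: "(i+j-1) div 2^Suc r = q" using r by simp
      have "odd ((i+1+j) choose (2*j)) \<longleftrightarrow> odd ((i+j-1) choose (2*j))"
        using G1[of "i+1+j" "Suc r"] G1[of "i+j-1" "Suc r"] d1 d2 r by simp
      then have "even (int ((i+1+j) choose (2*j)) - int ((i+j-1) choose (2*j)))" by simp
      then obtain f where "int ((i+1+j) choose (2*j)) - int ((i+j-1) choose (2*j)) = 2*f" by blast
      then show ?thesis using C by simp
    qed
  qed
qed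


lemma binomz_nat: "binomz (int x) (int l) = int (x choose l)"
  by (auto simp: binomz_def binomial_eq_0)

lemma binomz2:
  assumes "x \<le> k" "l \<le> k - i" "i \<le> k"
  shows "binomz (int k - int x) (int i - int x + int l) = int ((k - x) choose (k - i - l))"
proof (cases "x \<le> i + l")
  case True
  have e1: "int k - int x = int (k - x)" using assms by simp
  have e2: "int i - int x + int l = int (i + l - x)" using True by simp
  have "binomz (int k - int x) (int i - int x + int l) = int ((k - x) choose (i + l - x))"
    unfolding e1 e2 binomz_nat ..
  also have "(k - x) choose (i + l - x) = (k - x) choose (k - i - l)"
  proof (cases "i + l - x \<le> k - x")
    case True
    then show ?thesis using binomial_symmetric[OF True] assms \<open>x \<le> i + l\<close>
      by (metis diff_diff_cancel diff_diff_left diff_le_mono2 le_add_diff_inverse)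
  next
    case False
    then have False using assms by arith
    then show ?thesis ..
  qed
  finally show ?thesis .
next
  case False
  then have "k - i - l > k - x" using assms by simp
  then show ?thesis using False by (auto simp: binomz_def binomial_eq_0)
qed

lemma lam_R:
  assumes "x \<le> k" "i \<le> k"
  shows "jlambda k i x = (-1)^(k-i) * (\<Sum>j\<le>k-i. (-1)^j * int ((k - j) choose (k - i - j)) * int ((k - x) choose j) * int ((k - x + j) choose j))"
proof -
  have "jlambda k i x = (\<Sum>l\<le>k-i. (-1)^l * int (x choose l) * int ((k - x) choose (k - i - l))^2)"
    unfolding jlambda_def atLeast0AtMost
    by (rule sum.cong[OF refl]) (simp add: binomz_nat binomz2 assms)
  also have "\<dots> = (-1)^(k-i) * (\<Sum>j\<le>k-i. (-1)^j * int (((k - x) + x - j) choose (k - i - j)) * int ((k - x) choose j) * int ((k - x + j) choose j))"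
    using key[where d="k - i" and x=x and a="k - x"] by (simp add: diff_diff_add)
  also have "(k - x) + x = k" using assms by simp
  finally show ?thesis by simp
qed

lemma tri: "(a choose j) * ((a + j) choose j) = ((2*j) choose j) * ((a + j) choose (2*j))"
proof (cases "j \<le> a")
  case True
  have "((a + j) choose (2*j)) * ((2*j) choose j) = ((a + j) choose j) * ((a + j - j) choose (2*j - j))"
    by (rule choose_mult) (use True in auto)
  then show ?thesis by (simp add: mult.commute mult_2)
qed (simp add: binomial_eq_0)

lemma two_choose: "(i + 2) choose 2 = (i choose 2) + 2*i + 1"
  by (simp add: numeral_2_eq_2)

theorem mainTheorem13:
  fixes k i :: nat
  assumes "k \<ge> 3" and "odd k" and "1 \<le> i" and "i \<le> k - 1"
    and "odd (k choose i)" and "odd ((k - 1) choose i)"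
  shows "(jlambda k i (k - i + 1) - jlambda k i (k - i - 1)) mod 4 = 2"
proof -
  have ie: "even i"
  proof (rule ccontr)
    assume "\<not> even i"
    then have "odd (k - 1)" using lucas2[of "k - 1" i] assms(6) by auto
    with assms(1,2) show False by simp
  qed
  define m where "m = k - i"
  have m1: "m \<ge> 1" using assms m_def by simp
  have mo: "odd m" using assms ie m_def by simp
  have sg: "(-1::int)^m = -1" using mo by simp
  have k1: "k - (m + 1) = i - 1" using m_def assms by simp
  have k2: "k - (m - 1) = i + 1" using m_def assms by simp
  have L1: "jlambda k i (k - i + 1) = - (\<Sum>j\<le>m. (-1)^j * int ((k - j) choose (m - j)) * int ((i - 1) choose j) * int ((i - 1 + j) choose j))"
    using lam_R[of "m + 1" k i] assms m_def k1 sg by (simp add: diff_diff_add)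
  have L2: "jlambda k i (k - i - 1) = - (\<Sum>j\<le>m. (-1)^j * int ((k - j) choose (m - j)) * int ((i + 1) choose j) * int ((i + 1 + j) choose j))"
    using lam_R[of "m - 1" k i] assms m_def k2 sg by (simp add: diff_diff_add)
  define T where "T j = (-1)^j * int ((2*j) choose j) * int ((k - j) choose i) * (int ((i+1+j) choose (2*j)) - int ((i+j-1) choose (2*j)))" for j
  have D: "jlambda k i (k - i + 1) - jlambda k i (k - i - 1) = (\<Sum>j\<le>m. T j)"
  proof -
    have "jlambda k i (k - i + 1) - jlambda k i (k - i - 1)
       = (\<Sum>j\<le>m. (-1)^j * int ((k - j) choose (m - j)) * int ((i + 1) choose j) * int ((i + 1 + j) choose j))
       - (\<Sum>j\<le>m. (-1)^j * int ((k - j) choose (m - j)) * int ((i - 1) choose j) * int ((i - 1 + j) choose j))"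
      unfolding L1 L2 by simp
    also have "\<dots> = (\<Sum>j\<le>m. (-1)^j * int ((k - j) choose (m - j)) * int ((i + 1) choose j) * int ((i + 1 + j) choose j)
       - (-1)^j * int ((k - j) choose (m - j)) * int ((i - 1) choose j) * int ((i - 1 + j) choose j))"
      by (simp add: sum_subtractf)
    also have "\<dots> = (\<Sum>j\<le>m. T j)"
    proof (rule sum.cong[OF refl])
      fix j assume "j \<in> {..m}"
      then have jm: "j \<le> m" by simp
      have e: "m - j = k - j - i" using m_def by simp
      have "i \<le> k - j" using jm m_def assms by simp
      then have s: "(k - j) choose (m - j) = (k - j) choose i"
        using binomial_symmetric[of i "k - j"] e by metis
      have t1: "int ((i + 1) choose j) * int ((i + 1 + j) choose j) = int ((2*j) choose j) * int ((i + 1 + j) choose (2*j))"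
        using tri[of "i+1" j] by (simp only: of_nat_mult[symmetric])
      have t2: "int ((i - 1) choose j) * int ((i - 1 + j) choose j) = int ((2*j) choose j) * int ((i + j - 1) choose (2*j))"
        using tri[of "i-1" j] assms(3) by (simp only: of_nat_mult[symmetric]) (simp add: add.commute)
      show "(-1)^j * int ((k - j) choose (m - j)) * int ((i + 1) choose j) * int ((i + 1 + j) choose j)
       - (-1)^j * int ((k - j) choose (m - j)) * int ((i - 1) choose j) * int ((i - 1 + j) choose j) = T j"
        unfolding T_def s using t1 t2 by (simp add: algebra_simps)
    qed
    finally show ?thesis .
  qed
  obtain m' where mm: "m = Suc m'" using m1 by (cases m) auto
  have "(\<Sum>j\<le>m. T j) = T 0 + (T 1 + (\<Sum>j<m'. T (Suc (Suc j))))"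
    unfolding mm sum.atMost_shift sum.lessThan_Suc_shift by simp
  moreover have "T 0 = 0" unfolding T_def by simp
  moreover have "T 1 = -2 * int ((k - 1) choose i) * (2 * int i + 1)"
    unfolding T_def using two_choose[of i] assms(3) by (simp add: algebra_simps)
  moreover have "(4::int) dvd (\<Sum>j<m'. T (Suc (Suc j)))"
  proof (rule dvd_sum)
    fix j
    have "(4::int) dvd int ((2*Suc (Suc j)) choose (Suc (Suc j))) * int ((k - Suc (Suc j)) choose i) * (int ((i+1+Suc (Suc j)) choose (2*Suc (Suc j))) - int ((i+Suc (Suc j)-1) choose (2*Suc (Suc j))))"
      by (rule term4) (use ie assms(5) in auto)
    then show "(4::int) dvd T (Suc (Suc j))" unfolding T_def by (simp add: mult.assoc)
  qed
  ultimately obtain s where S: "(\<Sum>j\<le>m. T j) = -2 * int ((k - 1) choose i) * (2 * int i + 1) + 4 * s"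
    by (metis add_0 dvdE)
  obtain c where c: "int ((k - 1) choose i) = 2 * c + 1" using assms(6)
    by (metis oddE of_nat_1 of_nat_add of_nat_mult of_nat_numeral)
  have X: "jlambda k i (k - i + 1) - jlambda k i (k - i - 1) = 2 + 4 * (s - 2 * c * int i - int i - c - 1)"
    unfolding D S c by (simp add: algebra_simps)
  show ?thesis unfolding X by presburger
qed

end
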